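(* Let $X$ be a set and let $\mathrm{SGD}\langle X\rangle$ be the subalgebra of the free differential Poisson algebra $\mathrm{PoisDer}\langle X,d\rangle$ generated by $X$ with respect to the operations $[u,v]=\{u,v\}$ and $u\circ v=u\,d(v)$ (this is the free algebra of the variety generated by special GD-algebras). Then $\mathrm{SGD}\langle X\rangle$ coincides with the linear span of all differential Poisson monomials in $X$ (expressions built from elements of $X$ using $d$, the commutative product and the bracket) of weight $-1$.
   Context: A Poisson algebra has an associative commutative product and a Lie bracket $\{\cdot,\cdot\}$ satisfying $\{x,yz\}=\{x,y\}z+y\{x,z\}$; $\mathrm{PoisDer}\langle X,d\rangle$ is the free Poisson algebra generated by $X$ with a derivation $d$ of both operations. The weight of differential Poisson monomials is defined by $\mathrm{wt}(x)=-1$ for $x\in X$, $\mathrm{wt}(d(u))=\mathrm{wt}(u)+1$, $\mathrm{wt}(\{u,v\})=\mathrm{wt}(u)+\mathrm{wt}(v)+1$, $\mathrm{wt}(uv)=\mathrm{wt}(u)+\mathrm{wt}(v)$ (well defined since the Poisson identities are homogeneous for this weight). A GD-algebra is special if it embeds into a differential Poisson algebra with $[u,v]=\{u,v\}$ and $u\circ v=u\,d(v)$. *)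

theory Defs
  imports Main "HOL-Library.Poly_Mapping"
begin

datatype 'x dpmon =
    Gen 'x
  | Der "'x dpmon"
  | Prod "'x dpmon" "'x dpmon"
  | Brk "'x dpmon" "'x dpmon"

fun wt :: "'x dpmon \<Rightarrow> int" where
  "wt (Gen x) = -1"
| "wt (Der u) = wt u + 1"
| "wt (Prod u v) = wt u + wt v"
| "wt (Brk u v) = wt u + wt v + 1"

text \<open>Formal linear combinations of monomials over the field 'k (the free
  differential magma algebra); operations extended (bi)linearly.\<close>
type_synonym ('x, 'k) dpterm = "'x dpmon \<Rightarrow>\<^sub>0 'k"

definition mon :: "'x dpmon \<Rightarrow> ('x, 'k::field) dpterm" where
  "mon u = Poly_Mapping.single u 1"

definition scal :: "'k::field \<Rightarrow> ('x, 'k) dpterm \<Rightarrow> ('x, 'k) dpterm" where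
  "scal c f = Poly_Mapping.map (\<lambda>v. c * v) f"

definition derF :: "('x, 'k::field) dpterm \<Rightarrow> ('x, 'k) dpterm" where
  "derF f = (\<Sum>s\<in>Poly_Mapping.keys f. Poly_Mapping.single (Der s) (Poly_Mapping.lookup f s))"

definition prodF :: "('x, 'k::field) dpterm \<Rightarrow> ('x, 'k) dpterm \<Rightarrow> ('x, 'k) dpterm" where
  "prodF f g = (\<Sum>s\<in>Poly_Mapping.keys f. \<Sum>t\<in>Poly_Mapping.keys g. Poly_Mapping.single (Prod s t) (Poly_Mapping.lookup f s * Poly_Mapping.lookup g t))"

definition brkF :: "('x, 'k::field) dpterm \<Rightarrow> ('x, 'k) dpterm \<Rightarrow> ('x, 'k) dpterm" where
  "brkF f g = (\<Sum>s\<in>Poly_Mapping.keys f. \<Sum>t\<in>Poly_Mapping.keys g. Poly_Mapping.single (Brk s t) (Poly_Mapping.lookup f s * Poly_Mapping.lookup g t))"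

text \<open>PoisDer<X,d> is the quotient of dpterm by this ideal.\<close>
inductive_set dp_ideal :: "('x, 'k::field) dpterm set" where
  assoc: "prodF (prodF a b) c - prodF a (prodF b c) \<in> dp_ideal"
| comm: "prodF a b - prodF b a \<in> dp_ideal"
| alt: "brkF a a \<in> dp_ideal"
| jacobi: "brkF a (brkF b c) + brkF b (brkF c a) + brkF c (brkF a b) \<in> dp_ideal"
| leibniz: "brkF a (prodF b c) - (prodF (brkF a b) c + prodF b (brkF a c)) \<in> dp_ideal"
| der_prod: "derF (prodF a b) - (prodF (derF a) b + prodF a (derF b)) \<in> dp_ideal"
| der_brk: "derF (brkF a b) - (brkF (derF a) b + brkF a (derF b)) \<in> dp_ideal"
| zero: "0 \<in> dp_ideal"
| add: "i \<in> dp_ideal \<Longrightarrow> j \<in> dp_ideal \<Longrightarrow> i + j \<in> dp_ideal"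
| smul: "i \<in> dp_ideal \<Longrightarrow> scal c i \<in> dp_ideal"
| prodL: "i \<in> dp_ideal \<Longrightarrow> prodF a i \<in> dp_ideal"
| prodR: "i \<in> dp_ideal \<Longrightarrow> prodF i a \<in> dp_ideal"
| brkL: "i \<in> dp_ideal \<Longrightarrow> brkF a i \<in> dp_ideal"
| brkR: "i \<in> dp_ideal \<Longrightarrow> brkF i a \<in> dp_ideal"
| der: "i \<in> dp_ideal \<Longrightarrow> derF i \<in> dp_ideal"

inductive_set lspan :: "('x, 'k::field) dpterm set \<Rightarrow> ('x, 'k) dpterm set" for A where
  base: "a \<in> A \<Longrightarrow> a \<in> lspan A"
| zero: "0 \<in> lspan A"
| add: "f \<in> lspan A \<Longrightarrow> g \<in> lspan A \<Longrightarrow> f + g \<in> lspan A"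
| smul: "f \<in> lspan A \<Longrightarrow> scal c f \<in> lspan A"

text \<open>Preimage in dpterm of SGD<X>: the subalgebra generated by the generators with respect
  to [u,v] = {u,v} and u o v = u d(v).\<close>
inductive_set sgd :: "('x, 'k::field) dpterm set" where
  gen: "mon (Gen x) \<in> sgd"
| zero: "0 \<in> sgd"
| add: "f \<in> sgd \<Longrightarrow> g \<in> sgd \<Longrightarrow> f + g \<in> sgd"
| smul: "f \<in> sgd \<Longrightarrow> scal c f \<in> sgd"
| lie: "f \<in> sgd \<Longrightarrow> g \<in> sgd \<Longrightarrow> brkF f g \<in> sgd"
| circ: "f \<in> sgd \<Longrightarrow> g \<in> sgd \<Longrightarrow> prodF f (derF g) \<in> sgd"

text \<open>Image of a set of representatives in PoisDer<X,d>, recorded as its saturation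
  modulo the ideal (two sets have the same image in the quotient iff saturations agree).\<close>
definition mod_ideal :: "('x, 'k::field) dpterm set \<Rightarrow> ('x, 'k) dpterm set" where
  "mod_ideal A = {a + i | a i. a \<in> A \<and> i \<in> dp_ideal}"

end

theory Submission
  imports Defs
begin


definition bil :: "('x dpmon \<Rightarrow> 'x dpmon \<Rightarrow> 'x dpmon) \<Rightarrow> ('x, 'k::field) dpterm \<Rightarrow> ('x, 'k) dpterm \<Rightarrow> ('x, 'k) dpterm" where
  "bil F f g = (\<Sum>s\<in>Poly_Mapping.keys f. \<Sum>t\<in>Poly_Mapping.keys g. Poly_Mapping.single (F s t) (Poly_Mapping.lookup f s * Poly_Mapping.lookup g t))"

lemma prodF_bil: "prodF = bil Prod" by (intro ext) (simp add: prodF_def bil_def)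
lemma brkF_bil: "brkF = bil Brk" by (intro ext) (simp add: brkF_def bil_def)

lemma lookup_scal: "Poly_Mapping.lookup (scal c f) k = c * Poly_Mapping.lookup f k"
  by (simp add: scal_def Poly_Mapping.map.rep_eq when_def)

lemma keys_scal: "Poly_Mapping.keys (scal c f) \<subseteq> Poly_Mapping.keys f"
  by (auto simp: in_keys_iff lookup_scal)

lemma scal_add: "scal c (f + g) = scal c f + scal c g"
  by (rule poly_mapping_eqI) (simp add: lookup_scal lookup_add algebra_simps)

lemma scal_zero[simp]: "scal c 0 = 0"
  by (rule poly_mapping_eqI) (simp add: lookup_scal)

lemma scal_single: "scal c (Poly_Mapping.single k v) = Poly_Mapping.single k (c * v)"
  by (rule poly_mapping_eqI) (simp add: lookup_scal lookup_single when_def)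

lemma scal_sum: "scal c (\<Sum>i\<in>A. h i) = (\<Sum>i\<in>A. scal c (h i))"
  by (induction A rule: infinite_finite_induct) (simp_all add: scal_add)

lemma scal_neg: "scal (-1) f = - f"
  by (rule poly_mapping_eqI) (simp add: lookup_scal)

lemma sum_keys_ext:
  assumes "finite S" "Poly_Mapping.keys f \<subseteq> S" "\<And>s. H s 0 = 0"
  shows "(\<Sum>s\<in>Poly_Mapping.keys f. H s (Poly_Mapping.lookup f s)) = (\<Sum>s\<in>S. H s (Poly_Mapping.lookup f s))"
  by (rule sum.mono_neutral_left) (use assms in \<open>auto simp: in_keys_iff\<close>)

lemma bil_ext:
  assumes "finite S" "Poly_Mapping.keys f \<subseteq> S" "finite T" "Poly_Mapping.keys g \<subseteq> T"
  shows "bil F f g = (\<Sum>s\<in>S. \<Sum>t\<in>T. Poly_Mapping.single (F s t) (Poly_Mapping.lookup f s * Poly_Mapping.lookup g t))"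
proof -
  have "bil F f g = (\<Sum>s\<in>S. \<Sum>t\<in>Poly_Mapping.keys g. Poly_Mapping.single (F s t) (Poly_Mapping.lookup f s * Poly_Mapping.lookup g t))"
    unfolding bil_def by (rule sum_keys_ext[OF assms(1,2)]) simp
  also have "\<dots> = (\<Sum>s\<in>S. \<Sum>t\<in>T. Poly_Mapping.single (F s t) (Poly_Mapping.lookup f s * Poly_Mapping.lookup g t))"
    by (intro sum.cong refl sum_keys_ext[OF assms(3,4), where H="\<lambda>t v. Poly_Mapping.single (F _ t) (_ * v)"]) simp
  finally show ?thesis .
qed

lemma bil_addL: "bil F (f1 + f2) g = bil F f1 g + bil F f2 g"
proof -
  let ?S = "Poly_Mapping.keys f1 \<union> Poly_Mapping.keys f2" and ?T = "Poly_Mapping.keys g"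
  have "bil F (f1 + f2) g = (\<Sum>s\<in>?S. \<Sum>t\<in>?T. Poly_Mapping.single (F s t) (Poly_Mapping.lookup (f1+f2) s * Poly_Mapping.lookup g t))"
    by (rule bil_ext) (use keys_add[of f1 f2] in auto)
  also have "\<dots> = (\<Sum>s\<in>?S. \<Sum>t\<in>?T. Poly_Mapping.single (F s t) (Poly_Mapping.lookup f1 s * Poly_Mapping.lookup g t)) + (\<Sum>s\<in>?S. \<Sum>t\<in>?T. Poly_Mapping.single (F s t) (Poly_Mapping.lookup f2 s * Poly_Mapping.lookup g t))"
    by (simp add: lookup_add distrib_right single_add sum.distrib)
  also have "\<dots> = bil F f1 g + bil F f2 g"
    by (subst (1 2) bil_ext[of ?S _ ?T]) auto
  finally show ?thesis .
qed

lemma bil_addR: "bil F g (f1 + f2) = bil F g f1 + bil F g f2"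
proof -
  let ?S = "Poly_Mapping.keys f1 \<union> Poly_Mapping.keys f2" and ?T = "Poly_Mapping.keys g"
  have "bil F g (f1 + f2) = (\<Sum>t\<in>?T. \<Sum>s\<in>?S. Poly_Mapping.single (F t s) (Poly_Mapping.lookup g t * Poly_Mapping.lookup (f1+f2) s))"
    by (rule bil_ext) (use keys_add[of f1 f2] in auto)
  also have "\<dots> = (\<Sum>t\<in>?T. \<Sum>s\<in>?S. Poly_Mapping.single (F t s) (Poly_Mapping.lookup g t * Poly_Mapping.lookup f1 s)) + (\<Sum>t\<in>?T. \<Sum>s\<in>?S. Poly_Mapping.single (F t s) (Poly_Mapping.lookup g t * Poly_Mapping.lookup f2 s))"
    by (simp add: lookup_add distrib_left single_add sum.distrib)
  also have "\<dots> = bil F g f1 + bil F g f2"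
    by (subst (1 2) bil_ext[of ?T _ ?S]) auto
  finally show ?thesis .
qed

lemma bil_scalL: "bil F (scal c f) g = scal c (bil F f g)"
proof -
  have "bil F (scal c f) g = (\<Sum>s\<in>Poly_Mapping.keys f. \<Sum>t\<in>Poly_Mapping.keys g. Poly_Mapping.single (F s t) (Poly_Mapping.lookup (scal c f) s * Poly_Mapping.lookup g t))"
    by (rule bil_ext) (use keys_scal in auto)
  then show ?thesis by (simp add: bil_def scal_sum scal_single lookup_scal mult.assoc)
qed

lemma bil_scalR: "bil F g (scal c f) = scal c (bil F g f)"
proof -
  have "bil F g (scal c f) = (\<Sum>t\<in>Poly_Mapping.keys g. \<Sum>s\<in>Poly_Mapping.keys f. Poly_Mapping.single (F t s) (Poly_Mapping.lookup g t * Poly_Mapping.lookup (scal c f) s))"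
    by (rule bil_ext) (use keys_scal in auto)
  then show ?thesis by (simp add: bil_def scal_sum scal_single lookup_scal mult.left_commute)
qed

lemma bil_zeroL[simp]: "bil F 0 g = 0" by (simp add: bil_def)
lemma bil_zeroR[simp]: "bil F g 0 = 0" by (simp add: bil_def)

lemma bil_negL: "bil F (- f) g = - bil F f g"
  by (metis bil_scalL scal_neg)
lemma bil_negR: "bil F g (- f) = - bil F g f"
  by (metis bil_scalR scal_neg)
lemma bil_diffL: "bil F (f1 - f2) g = bil F f1 g - bil F f2 g"
  by (metis bil_addL bil_negL diff_conv_add_uminus)
lemma bil_diffR: "bil F g (f1 - f2) = bil F g f1 - bil F g f2"
  by (metis bil_addR bil_negR diff_conv_add_uminus)

lemma bil_mon: "bil F (mon u) (mon v) = (mon (F u v) :: ('x,'k::field) dpterm)"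
  by (simp add: bil_def mon_def)



lemma der_ext:
  assumes "finite S" "Poly_Mapping.keys f \<subseteq> S"
  shows "derF f = (\<Sum>s\<in>S. Poly_Mapping.single (Der s) (Poly_Mapping.lookup f s))"
  unfolding derF_def by (rule sum_keys_ext[OF assms]) simp

lemma der_add: "derF (f1 + f2) = derF f1 + derF f2"
proof -
  let ?S = "Poly_Mapping.keys f1 \<union> Poly_Mapping.keys f2"
  have "derF (f1 + f2) = (\<Sum>s\<in>?S. Poly_Mapping.single (Der s) (Poly_Mapping.lookup (f1+f2) s))"
    by (rule der_ext) (use keys_add[of f1 f2] in auto)
  also have "\<dots> = (\<Sum>s\<in>?S. Poly_Mapping.single (Der s) (Poly_Mapping.lookup f1 s)) + (\<Sum>s\<in>?S. Poly_Mapping.single (Der s) (Poly_Mapping.lookup f2 s))"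
    by (simp add: lookup_add single_add sum.distrib)
  also have "\<dots> = derF f1 + derF f2"
    by (subst (1 2) der_ext[of ?S]) auto
  finally show ?thesis .
qed

lemma der_scal: "derF (scal c f) = scal c (derF f)"
proof -
  have "derF (scal c f) = (\<Sum>s\<in>Poly_Mapping.keys f. Poly_Mapping.single (Der s) (Poly_Mapping.lookup (scal c f) s))"
    by (rule der_ext) (use keys_scal in auto)
  then show ?thesis by (simp add: derF_def scal_sum scal_single lookup_scal)
qed

lemma der_zero[simp]: "derF 0 = 0" by (simp add: derF_def)
lemma der_neg: "derF (- f) = - derF f" by (simp add: der_scal flip: scal_neg)
lemma der_diff: "derF (f1 - f2) = derF f1 - derF f2"
  by (simp only: diff_conv_add_uminus der_add der_neg)
lemma der_mon: "derF (mon u) = (mon (Der u) :: ('x,'k::field) dpterm)"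
  by (simp add: derF_def mon_def)

lemma prod_mon: "prodF (mon u) (mon v) = (mon (Prod u v) :: ('x,'k::field) dpterm)"
  by (simp add: prodF_bil bil_mon)
lemma brk_mon: "brkF (mon u) (mon v) = (mon (Brk u v) :: ('x,'k::field) dpterm)"
  by (simp add: brkF_bil bil_mon)

lemmas prod_lin = bil_addL[where F=Prod, folded prodF_bil] bil_addR[where F=Prod, folded prodF_bil]
  bil_scalL[where F=Prod, folded prodF_bil] bil_scalR[where F=Prod, folded prodF_bil]
  bil_negL[where F=Prod, folded prodF_bil] bil_negR[where F=Prod, folded prodF_bil]
  bil_diffL[where F=Prod, folded prodF_bil] bil_diffR[where F=Prod, folded prodF_bil]
  bil_zeroL[where F=Prod, folded prodF_bil] bil_zeroR[where F=Prod, folded prodF_bil]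
lemmas brk_lin = bil_addL[where F=Brk, folded brkF_bil] bil_addR[where F=Brk, folded brkF_bil]
  bil_scalL[where F=Brk, folded brkF_bil] bil_scalR[where F=Brk, folded brkF_bil]
  bil_negL[where F=Brk, folded brkF_bil] bil_negR[where F=Brk, folded brkF_bil]
  bil_diffL[where F=Brk, folded brkF_bil] bil_diffR[where F=Brk, folded brkF_bil]
  bil_zeroL[where F=Brk, folded brkF_bil] bil_zeroR[where F=Brk, folded brkF_bil]

lemma I_neg: "i \<in> dp_ideal \<Longrightarrow> - i \<in> dp_ideal"
  using dp_ideal.smul[of i "-1"] by (simp add: scal_neg)
lemma I_diff: "i \<in> dp_ideal \<Longrightarrow> j \<in> dp_ideal \<Longrightarrow> i - j \<in> dp_ideal"
  unfolding diff_conv_add_uminus by (intro dp_ideal.add I_neg)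

definition cg :: "('x, 'k::field) dpterm \<Rightarrow> ('x, 'k) dpterm \<Rightarrow> bool" where
  "cg f g \<longleftrightarrow> f - g \<in> dp_ideal"

lemma cg_refl: "cg f f" by (simp add: cg_def dp_ideal.zero)
lemma cg_sym: "cg f g \<Longrightarrow> cg g f" unfolding cg_def using I_neg[of "f - g"] by simp
lemma cg_trans: "cg f g \<Longrightarrow> cg g h \<Longrightarrow> cg f h" unfolding cg_def
  using dp_ideal.add[of "f - g" "g - h"] by simp
declare cg_trans[trans]
lemma cg_add: "cg f f' \<Longrightarrow> cg g g' \<Longrightarrow> cg (f + g) (f' + g')" unfolding cg_def
proof -
  assume "f - f' \<in> dp_ideal" "g - g' \<in> dp_ideal"
  then have "(f - f') + (g - g') \<in> dp_ideal" by (rule dp_ideal.add)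
  then show "f + g - (f' + g') \<in> dp_ideal" by (simp add: algebra_simps)
qed
lemma cg_scal: "cg f f' \<Longrightarrow> cg (scal c f) (scal c f')" unfolding cg_def
proof -
  assume "f - f' \<in> dp_ideal"
  then have "scal c (f - f') \<in> dp_ideal" by (rule dp_ideal.smul)
  moreover have "scal c (f - f') = scal c f - scal c f'"
    by (rule poly_mapping_eqI) (simp add: lookup_scal lookup_minus algebra_simps)
  ultimately show "scal c f - scal c f' \<in> dp_ideal" by simp
qed
lemma cg_neg: "cg f f' \<Longrightarrow> cg (- f) (- f')" unfolding cg_def
  using I_neg[of "f - f'"] by simp
lemma cg_diff: "cg f f' \<Longrightarrow> cg g g' \<Longrightarrow> cg (f - g) (f' - g')"
  unfolding diff_conv_add_uminus by (intro cg_add cg_neg)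
lemma cg_prod: "cg f f' \<Longrightarrow> cg g g' \<Longrightarrow> cg (prodF f g) (prodF f' g')" unfolding cg_def
proof -
  assume a: "f - f' \<in> dp_ideal" "g - g' \<in> dp_ideal"
  have "prodF (f - f') g + prodF f' (g - g') \<in> dp_ideal"
    using a by (intro dp_ideal.add dp_ideal.prodR dp_ideal.prodL)
  then show "prodF f g - prodF f' g' \<in> dp_ideal" by (simp add: prod_lin)
qed
lemma cg_brk: "cg f f' \<Longrightarrow> cg g g' \<Longrightarrow> cg (brkF f g) (brkF f' g')" unfolding cg_def
proof -
  assume a: "f - f' \<in> dp_ideal" "g - g' \<in> dp_ideal"
  have "brkF (f - f') g + brkF f' (g - g') \<in> dp_ideal"
    using a by (intro dp_ideal.add dp_ideal.brkR dp_ideal.brkL)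
  then show "brkF f g - brkF f' g' \<in> dp_ideal" by (simp add: brk_lin)
qed
lemma cg_der: "cg f f' \<Longrightarrow> cg (derF f) (derF f')" unfolding cg_def
  using dp_ideal.der[of "f - f'"] by (simp add: der_diff)

lemma cg_comm: "cg (prodF a b) (prodF b a)" unfolding cg_def by (rule dp_ideal.comm)
lemma cg_assoc: "cg (prodF (prodF a b) c) (prodF a (prodF b c))" unfolding cg_def by (rule dp_ideal.assoc)
lemma cg_antisym: "cg (brkF a b) (- brkF b a)" unfolding cg_def
proof -
  have "brkF (a+b) (a+b) - brkF a a - brkF b b \<in> dp_ideal"
    by (intro I_diff dp_ideal.alt)
  then show "brkF a b - - brkF b a \<in> dp_ideal" by (simp add: brk_lin algebra_simps)
qed
lemma cg_leibR: "cg (brkF a (prodF b c)) (prodF (brkF a b) c + prodF b (brkF a c))"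
  unfolding cg_def by (rule dp_ideal.leibniz)
lemma cg_derP: "cg (derF (prodF a b)) (prodF (derF a) b + prodF a (derF b))"
  unfolding cg_def by (rule dp_ideal.der_prod)
lemma cg_leibL: "cg (brkF (prodF b c) a) (prodF (brkF b a) c + prodF b (brkF c a))"
proof -
  have "cg (brkF (prodF b c) a) (- brkF a (prodF b c))" by (rule cg_antisym)
  also have "cg \<dots> (- (prodF (brkF a b) c + prodF b (brkF a c)))" by (intro cg_neg cg_leibR)
  also have "cg \<dots> (- (prodF (- brkF b a) c + prodF b (- brkF c a)))"
    by (intro cg_neg cg_add cg_prod cg_antisym cg_refl)
  also have "(- (prodF (- brkF b a) c + prodF b (- brkF c a))) = prodF (brkF b a) c + prodF b (brkF c a)"
    by (simp add: prod_lin)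
  finally show ?thesis .
qed



definition AA :: "('x, 'k::field) dpterm set" where "AA = mod_ideal sgd"

lemma AA_iff: "f \<in> AA \<longleftrightarrow> (\<exists>s i. f = s + i \<and> s \<in> sgd \<and> i \<in> dp_ideal)"
  by (auto simp: AA_def mod_ideal_def)

lemma AA_intro: "s \<in> sgd \<Longrightarrow> i \<in> dp_ideal \<Longrightarrow> f = s + i \<Longrightarrow> f \<in> AA"
  unfolding AA_iff by blast

lemma A_cg: assumes "f \<in> AA" "cg f g" shows "g \<in> AA"
proof -
  obtain s i where f: "f = s + i" "s \<in> sgd" "i \<in> dp_ideal" using assms(1) by (auto simp: AA_iff)
  have "i - (f - g) \<in> dp_ideal" by (rule I_diff[OF f(3)]) (use assms(2) in \<open>simp add: cg_def\<close>)
  moreover have "g = s + (i - (f - g))" using f by simp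
  ultimately show ?thesis using f(2) by (intro AA_intro)
qed

lemma A_sgd: "s \<in> sgd \<Longrightarrow> s \<in> AA"
  unfolding AA_iff by (rule exI[of _ s], rule exI[of _ 0]) (simp add: dp_ideal.zero)

lemma A_add: assumes "f \<in> AA" "g \<in> AA" shows "f + g \<in> AA"
proof -
  obtain s i where f: "f = s + i" "s \<in> sgd" "i \<in> dp_ideal" using assms(1) by (auto simp: AA_iff)
  obtain s' i' where g: "g = s' + i'" "s' \<in> sgd" "i' \<in> dp_ideal" using assms(2) by (auto simp: AA_iff)
  have "f + g = (s + s') + (i + i')" using f g by (simp add: algebra_simps)
  then show ?thesis using f g by (intro AA_intro[OF sgd.add dp_ideal.add])
qed

lemma A_scal: assumes "f \<in> AA" shows "scal c f \<in> AA"
proof -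
  obtain s i where f: "f = s + i" "s \<in> sgd" "i \<in> dp_ideal" using assms(1) by (auto simp: AA_iff)
  have "scal c f = scal c s + scal c i" using f by (simp add: scal_add)
  then show ?thesis using f by (intro AA_intro[OF sgd.smul dp_ideal.smul])
qed

lemma A_neg: "f \<in> AA \<Longrightarrow> - f \<in> AA"
  using A_scal[of f "-1"] by (simp add: scal_neg)

lemma A_zero: "0 \<in> AA" by (rule A_sgd) (rule sgd.zero)

lemma A_brk: assumes "f \<in> AA" "g \<in> AA" shows "brkF f g \<in> AA"
proof -
  obtain s i where f: "f = s + i" "s \<in> sgd" "i \<in> dp_ideal" using assms(1) by (auto simp: AA_iff)
  obtain s' i' where g: "g = s' + i'" "s' \<in> sgd" "i' \<in> dp_ideal" using assms(2) by (auto simp: AA_iff)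
  have "brkF f g = brkF s s' + (brkF s i' + brkF i g)" using f g by (simp add: brk_lin algebra_simps)
  moreover have "brkF s i' + brkF i g \<in> dp_ideal" using f g by (intro dp_ideal.add dp_ideal.brkL dp_ideal.brkR)
  ultimately show ?thesis using f g by (intro AA_intro[OF sgd.lie]) auto
qed

lemma A_circ: assumes "f \<in> AA" "g \<in> AA" shows "prodF f (derF g) \<in> AA"
proof -
  obtain s i where f: "f = s + i" "s \<in> sgd" "i \<in> dp_ideal" using assms(1) by (auto simp: AA_iff)
  obtain s' i' where g: "g = s' + i'" "s' \<in> sgd" "i' \<in> dp_ideal" using assms(2) by (auto simp: AA_iff)
  have "prodF f (derF g) = prodF s (derF s') + (prodF s (derF i') + prodF i (derF g))"
    using f g by (simp add: prod_lin der_add algebra_simps)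
  moreover have "prodF s (derF i') + prodF i (derF g) \<in> dp_ideal"
    using f g by (intro dp_ideal.add dp_ideal.prodL dp_ideal.prodR dp_ideal.der)
  ultimately show ?thesis using f g by (intro AA_intro[OF sgd.circ]) auto
qed

fun G :: "nat \<Rightarrow> ('x, 'k::field) dpterm \<Rightarrow> bool" where
  "G 0 f = (f \<in> AA)"
| "G (Suc n) f = (\<forall>a\<in>AA. G n (prodF f a))"

lemma G_cg: "G n f \<Longrightarrow> cg f g \<Longrightarrow> G n g"
proof (induction n arbitrary: f g)
  case 0 then show ?case using A_cg by auto
next
  case (Suc n) then show ?case by (auto intro: cg_prod cg_refl)
qed

lemma G_add: "G n f \<Longrightarrow> G n g \<Longrightarrow> G n (f + g)"
  by (induction n arbitrary: f g) (auto simp: A_add prod_lin)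

lemma G_scal: "G n f \<Longrightarrow> G n (scal c f)"
  by (induction n arbitrary: f) (auto simp: A_scal prod_lin)

lemma G_neg: "G n f \<Longrightarrow> G n (- f)"
  using G_scal[of n f "-1"] by (simp add: scal_neg)

lemma G_diff: "G n f \<Longrightarrow> G n g \<Longrightarrow> G n (f - g)"
  unfolding diff_conv_add_uminus by (intro G_add G_neg)

lemma Gprod: "G m f \<Longrightarrow> G n g \<Longrightarrow> 1 \<le> m + n \<Longrightarrow> G (m + n - 1) (prodF f g)"
proof (induction n arbitrary: g)
  case 0
  then obtain k where m: "m = Suc k" by (cases m) auto
  then show ?case using 0 by auto
next
  case (Suc k)
  show ?case
  proof (cases m)
    case 0
    then have "f \<in> AA" using Suc by simp
    then have "G k (prodF g f)" using Suc by simp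
    then show ?thesis using 0 by (auto intro: G_cg cg_comm)
  next
    case (Suc j)
    have "\<forall>a\<in>AA. G (j + k) (prodF (prodF f g) a)"
    proof
      fix a :: "('a, 'b) dpterm" assume a: "a \<in> AA"
      have "G k (prodF g a)" using Suc.prems a by simp
      then have "G (m + k - 1) (prodF f (prodF g a))" using Suc.IH Suc.prems Suc by simp
      then show "G (j + k) (prodF (prodF f g) a)" using Suc by (auto intro: G_cg cg_sym[OF cg_assoc])
    qed
    then show ?thesis using Suc by simp
  qed
qed



lemma Gder: "G n f \<Longrightarrow> G (Suc n) (derF f)"
proof (induction n arbitrary: f)
  case 0
  show ?case
  proof (simp, intro ballI)
    fix a :: "('a,'b) dpterm" assume "a \<in> AA"
    then have "prodF a (derF f) \<in> AA" using 0 by (simp add: A_circ)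
    then show "prodF (derF f) a \<in> AA" by (rule A_cg) (rule cg_comm)
  qed
next
  case (Suc k)
  show ?case
  proof (simp only: G.simps, intro ballI)
    fix a b :: "('a,'b) dpterm" assume a: "a \<in> AA" and b: "b \<in> AA"
    have "G k (prodF f b)" using Suc.prems b by simp
    then have "G (Suc k) (derF (prodF f b))" by (rule Suc.IH)
    then have X: "G k (prodF (derF (prodF f b)) a)" using a by simp
    have Y: "G k (prodF f (prodF a (derF b)))" using Suc.prems a b by (simp add: A_circ)
    let ?P = "prodF (prodF (derF f) b) a" and ?Q = "prodF (prodF f (derF b)) a"
    have c1: "cg (prodF (derF (prodF f b)) a) (?P + ?Q)"
      using cg_prod[OF cg_derP cg_refl, of f b a] by (simp add: prod_lin)
    have c2: "cg ?Q (prodF f (prodF a (derF b)))"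
    proof -
      have "cg ?Q (prodF f (prodF (derF b) a))" by (rule cg_assoc)
      also have "cg \<dots> (prodF f (prodF a (derF b)))" by (intro cg_prod cg_refl cg_comm)
      finally show ?thesis .
    qed
    have "G k (prodF (derF (prodF f b)) a - prodF f (prodF a (derF b)))" using X Y by (rule G_diff)
    moreover have "cg (prodF (derF (prodF f b)) a - prodF f (prodF a (derF b))) (?P + ?Q - ?Q)"
      using c1 cg_sym[OF c2] by (rule cg_diff)
    ultimately have "G k ?P" by (auto intro: G_cg)
    moreover have "cg ?P (prodF (prodF (derF f) a) b)"
    proof -
      have "cg ?P (prodF (derF f) (prodF b a))" by (rule cg_assoc)
      also have "cg \<dots> (prodF (derF f) (prodF a b))" by (intro cg_prod cg_refl cg_comm)
      also have "cg \<dots> (prodF (prodF (derF f) a) b)" by (rule cg_sym[OF cg_assoc])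
      finally show ?thesis .
    qed
    ultimately show "G k (prodF (prodF (derF f) a) b)" by (rule G_cg)
  qed
qed

lemma G_brkA: "G n f \<Longrightarrow> b \<in> AA \<Longrightarrow> G n (brkF f b)"
proof (induction n arbitrary: f)
  case 0 then show ?case by (simp add: A_brk)
next
  case (Suc k)
  show ?case
  proof (simp only: G.simps, intro ballI)
    fix a :: "('a,'b) dpterm" assume a: "a \<in> AA"
    have "G k (prodF f a)" using Suc.prems a by simp
    then have X: "G k (brkF (prodF f a) b)" using Suc.IH Suc.prems by blast
    have Y: "G k (prodF f (brkF a b))" using Suc.prems a by (simp add: A_brk)
    have "G k (brkF (prodF f a) b - prodF f (brkF a b))" using X Y by (rule G_diff)
    moreover have "cg (brkF (prodF f a) b - prodF f (brkF a b))
       (prodF (brkF f b) a + prodF f (brkF a b) - prodF f (brkF a b))"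
      by (intro cg_diff cg_leibL cg_refl)
    ultimately show "G k (prodF (brkF f b) a)" by (auto intro: G_cg)
  qed
qed

lemma G_brk0: "f \<in> AA \<Longrightarrow> G n g \<Longrightarrow> G n (brkF f g)"
  using G_neg[OF G_brkA[of n g f]] cg_sym[OF cg_antisym[of f g]] by (auto intro: G_cg)

lemma G_brk: "G m f \<Longrightarrow> G n g \<Longrightarrow> G (m + n) (brkF f g)"
proof (induction m arbitrary: f)
  case 0 then show ?case by (simp add: G_brk0)
next
  case (Suc k)
  have "\<forall>a\<in>AA. G (k + n) (prodF (brkF f g) a)"
  proof
    fix a :: "('a,'b) dpterm" assume a: "a \<in> AA"
    have "G k (prodF f a)" using Suc.prems a by simp
    then have X: "G (k + n) (brkF (prodF f a) g)" using Suc.IH Suc.prems by blast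
    have "G n (brkF a g)" using a Suc.prems by (simp add: G_brk0)
    then have Y: "G (k + n) (prodF f (brkF a g))" using Gprod[OF Suc.prems(1)] by fastforce
    have "G (k+n) (brkF (prodF f a) g - prodF f (brkF a g))" using X Y by (rule G_diff)
    moreover have "cg (brkF (prodF f a) g - prodF f (brkF a g))
       (prodF (brkF f g) a + prodF f (brkF a g) - prodF f (brkF a g))"
      by (intro cg_diff cg_leibL cg_refl)
    ultimately show "G (k + n) (prodF (brkF f g) a)" by (auto intro: G_cg)
  qed
  then show ?case by simp
qed



inductive M :: "int \<Rightarrow> ('x, 'k::field) dpterm \<Rightarrow> bool" where
  base: "G n f \<Longrightarrow> M (int n) f"
| prod: "M i f \<Longrightarrow> M j g \<Longrightarrow> M (i + j - 1) (prodF f g)"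
| add: "M i f \<Longrightarrow> M i g \<Longrightarrow> M i (f + g)"
| scal: "M i f \<Longrightarrow> M i (scal c f)"
| cgr: "M i f \<Longrightarrow> cg f g \<Longrightarrow> M i g"

lemma M_idx: "M i f \<Longrightarrow> i = j \<Longrightarrow> M j f" by simp

lemma M_neg: "M i f \<Longrightarrow> M i (- f)"
  using M.scal[of i f "-1"] by (simp add: scal_neg)

lemma MC: "M i f \<Longrightarrow> G n g \<Longrightarrow> 1 \<le> i + int n \<Longrightarrow> G (nat (i + int n - 1)) (prodF f g)"
proof (induction arbitrary: n g rule: M.induct)
  case (base m f)
  then have "G (m + n - 1) (prodF f g)" by (intro Gprod) auto
  moreover have "nat (int m + int n - 1) = m + n - 1" using base by auto
  ultimately show ?case by simp
next
  case (prod i1 f1 i2 f2)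
  show ?case
  proof (cases "1 \<le> i2 + int n")
    case True
    then have "G (nat (i2 + int n - 1)) (prodF f2 g)" using prod by blast
    moreover have "1 \<le> i1 + int (nat (i2 + int n - 1))" using True prod.prems by simp
    ultimately have "G (nat (i1 + int (nat (i2 + int n - 1)) - 1)) (prodF f1 (prodF f2 g))"
      using prod.IH(1) by blast
    moreover have "nat (i1 + int (nat (i2 + int n - 1)) - 1) = nat (i1 + i2 - 1 + int n - 1)"
      using True by simp
    ultimately show ?thesis by (auto intro: G_cg cg_sym[OF cg_assoc])
  next
    case False
    then have T: "1 \<le> i1 + int n" using prod.prems by simp
    then have "G (nat (i1 + int n - 1)) (prodF f1 g)" using prod by blast
    moreover have "1 \<le> i2 + int (nat (i1 + int n - 1))" using T prod.prems by simp
    ultimately have "G (nat (i2 + int (nat (i1 + int n - 1)) - 1)) (prodF f2 (prodF f1 g))"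
      using prod.IH(2) by blast
    moreover have "nat (i2 + int (nat (i1 + int n - 1)) - 1) = nat (i1 + i2 - 1 + int n - 1)"
      using T by simp
    moreover have "cg (prodF f2 (prodF f1 g)) (prodF (prodF f1 f2) g)"
    proof -
      have "cg (prodF f2 (prodF f1 g)) (prodF (prodF f2 f1) g)" by (rule cg_sym[OF cg_assoc])
      also have "cg \<dots> (prodF (prodF f1 f2) g)" by (intro cg_prod cg_refl cg_comm)
      finally show ?thesis .
    qed
    ultimately show ?thesis by (auto intro: G_cg)
  qed
next
  case (add i f h)
  then show ?case by (auto simp: prod_lin intro: G_add)
next
  case (scal i f c)
  then show ?case by (auto simp: prod_lin intro: G_scal)
next
  case (cgr i f h)
  then show ?case by (auto intro: G_cg cg_prod cg_refl)
qed

lemma MD: "M i f \<Longrightarrow> 0 \<le> i \<Longrightarrow> G (nat i) f"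
proof (induction rule: M.induct)
  case (base n f) then show ?case by simp
next
  case (prod i1 f1 i2 f2)
  show ?case
  proof (cases "0 \<le> i1")
    case True
    then have "G (nat i1) f1" using prod by blast
    then have "G (nat (i2 + int (nat i1) - 1)) (prodF f2 f1)"
      using MC[OF prod.hyps(2) \<open>G (nat i1) f1\<close>] prod.prems True by simp
    then show ?thesis using True by (auto intro: G_cg cg_comm simp: add.commute)
  next
    case False
    then have T: "0 \<le> i2" using prod.prems by simp
    then have "G (nat i2) f2" using prod by blast
    then have "G (nat (i1 + int (nat i2) - 1)) (prodF f1 f2)"
      using MC[OF prod.hyps(1) \<open>G (nat i2) f2\<close>] prod.prems T by simp
    then show ?thesis using T by simp
  qed
next
  case (add i f g) then show ?case by (auto intro: G_add)
next
  case (scal i f c) then show ?case by (auto intro: G_scal)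
next
  case (cgr i f g) then show ?case by (auto intro: G_cg)
qed

lemma ME: "M i f \<Longrightarrow> M (i + 1) (derF f)"
proof (induction rule: M.induct)
  case (base n f)
  then show ?case using M.base[OF Gder[OF base]] by (simp add: add.commute)
next
  case (prod i f j g)
  have h1: "M (i + 1 + j - 1) (prodF (derF f) g)" using M.prod[OF prod.IH(1) prod.hyps(2)] .
  have h2: "M (i + (j + 1) - 1) (prodF f (derF g))" using M.prod[OF prod.hyps(1) prod.IH(2)] .
  have "M (i + j - 1 + 1) (prodF (derF f) g + prodF f (derF g))"
    by (rule M.add; (rule M_idx[OF h1] | rule M_idx[OF h2])) simp_all
  then show ?case by (rule M.cgr) (rule cg_sym[OF cg_derP])
next
  case (add i f g) then show ?case by (simp add: der_add M.add)
next
  case (scal i f c) then show ?case by (simp add: der_scal M.scal)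
next
  case (cgr i f g) then show ?case by (auto intro: M.cgr cg_der)
qed

lemma MF1: "M j g \<Longrightarrow> G m f \<Longrightarrow> M (int m + j) (brkF f g)"
proof (induction rule: M.induct)
  case (base n g)
  then show ?case using M.base[OF G_brk[OF base(2) base(1)]] by simp
next
  case (prod j1 g1 j2 g2)
  have h1: "M (int m + j1 + j2 - 1) (prodF (brkF f g1) g2)"
    using M.prod[OF prod.IH(1)[OF prod.prems] prod.hyps(2)] by simp
  have h2: "M (j1 + (int m + j2) - 1) (prodF g1 (brkF f g2))"
    using M.prod[OF prod.hyps(1) prod.IH(2)[OF prod.prems]] by simp
  have "M (int m + (j1 + j2 - 1)) (prodF (brkF f g1) g2 + prodF g1 (brkF f g2))"
    by (rule M.add; (rule M_idx[OF h1] | rule M_idx[OF h2])) simp_all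
  then show ?case by (rule M.cgr) (rule cg_sym[OF cg_leibR])
next
  case (add i g h) then show ?case by (simp add: brk_lin M.add)
next
  case (scal i g c) then show ?case by (simp add: brk_lin M.scal)
next
  case (cgr i g h) then show ?case by (auto intro: M.cgr cg_brk cg_refl)
qed

lemma MF: "M i f \<Longrightarrow> M j g \<Longrightarrow> M (i + j) (brkF f g)"
proof (induction rule: M.induct)
  case (base n f)
  then show ?case using MF1 by blast
next
  case (prod i1 f1 i2 f2)
  have h1: "M (i1 + j + i2 - 1) (prodF (brkF f1 g) f2)"
    using M.prod[OF prod.IH(1)[OF prod.prems] prod.hyps(2)] by simp
  have h2: "M (i1 + (i2 + j) - 1) (prodF f1 (brkF f2 g))"
    using M.prod[OF prod.hyps(1) prod.IH(2)[OF prod.prems]] by simp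
  have "M (i1 + i2 - 1 + j) (prodF (brkF f1 g) f2 + prodF f1 (brkF f2 g))"
    by (rule M.add; (rule M_idx[OF h1] | rule M_idx[OF h2])) simp_all
  then show ?case by (rule M.cgr) (rule cg_sym[OF cg_leibL])
next
  case (add i f h) then show ?case by (simp add: brk_lin M.add)
next
  case (scal i f c) then show ?case by (simp add: brk_lin M.scal)
next
  case (cgr i f h) then show ?case by (auto intro: M.cgr cg_brk cg_refl)
qed

lemma M_mon: "M (wt u + 1) (mon u :: ('x, 'k::field) dpterm)"
proof (induction u)
  case (Gen x)
  have "G 0 (mon (Gen x) :: ('x, 'k) dpterm)" by (simp add: A_sgd sgd.gen)
  then show ?case using M.base[of 0] by simp
next
  case (Der u)
  then show ?case using ME[OF Der] by (simp add: der_mon)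
next
  case (Prod u v)
  then show ?case using M.prod[OF Prod.IH] by (simp add: prod_mon algebra_simps)
next
  case (Brk u v)
  then show ?case using MF[OF Brk.IH] by (simp add: brk_mon algebra_simps)
qed

lemma mon_AA: "wt u = -1 \<Longrightarrow> (mon u :: ('x, 'k::field) dpterm) \<in> AA"
  using MD[OF M_mon[of u]] by simp



lemma bil_lspan:
  assumes f: "f \<in> lspan A" and g: "g \<in> lspan B"
    and h: "\<And>a b. a \<in> A \<Longrightarrow> b \<in> B \<Longrightarrow> bil F a b \<in> lspan C"
  shows "bil F f g \<in> lspan C"
  using f
proof (induction rule: lspan.induct)
  case (base a)
  from g show ?case
  proof (induction rule: lspan.induct)
    case (base b) then show ?case using h \<open>a \<in> A\<close> by blast
  next
    case zero then show ?case by (simp add: lspan.zero)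
  next
    case (add f g) then show ?case by (simp add: bil_addR lspan.add)
  next
    case (smul f c) then show ?case by (simp add: bil_scalR lspan.smul)
  qed
next
  case zero then show ?case by (simp add: lspan.zero)
next
  case (add f g) then show ?case by (simp add: bil_addL lspan.add)
next
  case (smul f c) then show ?case by (simp add: bil_scalL lspan.smul)
qed

lemma der_lspan:
  assumes f: "f \<in> lspan A" and h: "\<And>a. a \<in> A \<Longrightarrow> derF a \<in> lspan C"
  shows "derF f \<in> lspan C"
  using f
proof (induction rule: lspan.induct)
  case (base a) then show ?case using h by blast
next
  case zero then show ?case by (simp add: lspan.zero)
next
  case (add f g) then show ?case by (simp add: der_add lspan.add)
next
  case (smul f c) then show ?case by (simp add: der_scal lspan.smul)
qed

lemma sgd_lspan: "f \<in> sgd \<Longrightarrow> (f :: ('x,'k::field) dpterm) \<in> lspan {mon u | u :: 'x dpmon. wt u = -1}"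
proof (induction rule: sgd.induct)
  case (gen x) then show ?case by (intro lspan.base) auto
next
  case zero then show ?case by (rule lspan.zero)
next
  case (add f g) then show ?case by (blast intro: lspan.add)
next
  case (smul f c) then show ?case by (blast intro: lspan.smul)
next
  case (lie f g)
  have "bil Brk f g \<in> lspan {mon u | u :: 'x dpmon. wt u = -1}"
    by (rule bil_lspan[OF lie.IH]) (auto simp: bil_mon intro!: lspan.base)
  then show ?case by (simp add: brkF_bil)
next
  case (circ f g)
  have d: "derF g \<in> lspan {mon u | u :: 'x dpmon. wt u = 0}"
    by (rule der_lspan[OF circ.IH(2)]) (auto simp: der_mon intro!: lspan.base)
  have "bil Prod f (derF g) \<in> lspan {mon u | u :: 'x dpmon. wt u = -1}"
    by (rule bil_lspan[OF circ.IH(1) d]) (auto simp: bil_mon intro!: lspan.base)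
  then show ?case by (simp add: prodF_bil)
qed

lemma lspan_AA: "f \<in> lspan {mon u | u :: 'x dpmon. wt u = -1} \<Longrightarrow> (f :: ('x,'k::field) dpterm) \<in> AA"
proof (induction rule: lspan.induct)
  case (base a) then show ?case using mon_AA by blast
next
  case zero then show ?case by (rule A_zero)
next
  case (add f g) then show ?case by (blast intro: A_add)
next
  case (smul f c) then show ?case by (blast intro: A_scal)
qed

theorem mainTheorem16:
  shows "mod_ideal (sgd :: ('x, 'k::field) dpterm set)
         = mod_ideal (lspan {mon u | u :: 'x dpmon. wt u = -1})"
proof
  show "mod_ideal (sgd :: ('x, 'k::field) dpterm set) \<subseteq> mod_ideal (lspan {mon u | u :: 'x dpmon. wt u = -1})"
    unfolding mod_ideal_def using sgd_lspan by blast
next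
  show "mod_ideal (lspan {mon u | u :: 'x dpmon. wt u = -1}) \<subseteq> mod_ideal (sgd :: ('x, 'k::field) dpterm set)"
  proof
    fix x :: "('x,'k) dpterm"
    assume "x \<in> mod_ideal (lspan {mon u | u :: 'x dpmon. wt u = -1})"
    then obtain l i where x: "x = l + i" "l \<in> lspan {mon u | u :: 'x dpmon. wt u = -1}" "i \<in> dp_ideal"
      unfolding mod_ideal_def by blast
    then have "l \<in> AA" by (intro lspan_AA)
    then obtain s j where l: "l = s + j" "s \<in> sgd" "j \<in> dp_ideal" by (auto simp: AA_iff)
    have "x = s + (j + i)" using x l by (simp add: add.assoc)
    moreover have "j + i \<in> dp_ideal" using l x by (intro dp_ideal.add)
    ultimately show "x \<in> mod_ideal sgd" using l unfolding mod_ideal_def by blast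
  qed
qed

end
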